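(* Let $\kappa>0$, $q:=e^{-2\kappa}$, $\gamma_n:=\tanh(\kappa n)$, and for $n,k\in\mathbb{N}$ and $t\ge0$ let \[ q_n^{(k)}(t):=\sqrt{\frac{\gamma_n}{\gamma_k}}\int_0^{\pi}e^{-t(1-\cos\theta)}P_n(\theta)P_k(\theta)\,{\rm d}\mu(\theta). \] Let $\ell\in\mathbb{N}$. Then for every $n\in\mathbb{N}$ and $t$ there is a constant $C_{n,\ell}(q,t)$, not depending on $k$, such that \[ \bigl|q_n^{(k)}(t)\bigr|\le\frac{C_{n,\ell}(q,t)}{k^{\ell}}\quad\text{for all }k\in\mathbb{N}. \]
   Context: $(a;q)_n:=\prod_{j=0}^{n-1}(1-aq^j)$, $n\in\mathbb{N}_0\cup\{\infty\}$. For $n\in\mathbb{N}$ and $\theta\in\mathbb{R}$, $P_n(\theta):=\sqrt{\gamma_1/\gamma_n}\sum_{k=0}^{n-1}\frac{(-q;q)_k(-q;q)_{n-1-k}}{(q;q)_k(q;q)_{n-1-k}}\cos((2k-n+1)\theta)$. The measure $\mu$ on $(0,\pi)$ is given by \[ \frac{{\rm d}\mu}{{\rm d}\theta}(\theta)=\frac{2}{\pi\gamma_1}\sin^2(\theta)\left|\frac{(q,qe^{2{\rm i}\theta};q)_\infty}{(-q,-qe^{2{\rm i}\theta};q)_\infty}\right|^2. \] ($q_n^{(k)}$ is the solution of $\dot q_n=-q_n+\frac{\gamma_n}{2}(q_{n-1}+q_{n+1})$, $q_0=0$, with $q_n^{(k)}(0)=\delta_{k,n}$.) *)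

theory Defs
  imports "HOL-Analysis.Analysis"
begin

definition qpoch :: "real \<Rightarrow> real \<Rightarrow> nat \<Rightarrow> real" where
  "qpoch a q n = (\<Prod>j<n. 1 - a * q ^ j)"

definition cqpoch_inf :: "complex \<Rightarrow> complex \<Rightarrow> complex" where
  "cqpoch_inf a q = (\<Prod>j. 1 - a * q ^ j)"

definition gam :: "real \<Rightarrow> nat \<Rightarrow> real" where
  "gam \<kappa> n = tanh (\<kappa> * real n)"

definition qpar :: "real \<Rightarrow> real" where
  "qpar \<kappa> = exp (- 2 * \<kappa>)"

text \<open>P_n(theta), for n >= 1.\<close>
definition Ppoly :: "real \<Rightarrow> nat \<Rightarrow> real \<Rightarrow> real" where
  "Ppoly \<kappa> n \<theta> = sqrt (gam \<kappa> 1 / gam \<kappa> n) *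
     (\<Sum>k<n. qpoch (- qpar \<kappa>) (qpar \<kappa>) k * qpoch (- qpar \<kappa>) (qpar \<kappa>) (n - 1 - k)
              / (qpoch (qpar \<kappa>) (qpar \<kappa>) k * qpoch (qpar \<kappa>) (qpar \<kappa>) (n - 1 - k))
              * cos ((2 * real k - real n + 1) * \<theta>))"

definition mu_dens :: "real \<Rightarrow> real \<Rightarrow> real" where
  "mu_dens \<kappa> \<theta> = 2 / (pi * gam \<kappa> 1) * (sin \<theta>)\<^sup>2 *
     (cmod ((cqpoch_inf (of_real (qpar \<kappa>)) (of_real (qpar \<kappa>)) *
             cqpoch_inf (of_real (qpar \<kappa>) * exp (2 * \<i> * of_real \<theta>)) (of_real (qpar \<kappa>)))
          / (cqpoch_inf (- of_real (qpar \<kappa>)) (of_real (qpar \<kappa>)) *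
             cqpoch_inf (- of_real (qpar \<kappa>) * exp (2 * \<i> * of_real \<theta>)) (of_real (qpar \<kappa>)))))\<^sup>2"

definition qsol :: "real \<Rightarrow> nat \<Rightarrow> nat \<Rightarrow> real \<Rightarrow> real" where
  "qsol \<kappa> n k t = sqrt (gam \<kappa> n / gam \<kappa> k) *
     (LBINT \<theta>=0..pi. exp (- t * (1 - cos \<theta>)) * Ppoly \<kappa> n \<theta> * Ppoly \<kappa> k \<theta> * mu_dens \<kappa> \<theta>)"

end

theory Submission
  imports Defs "HOL-Complex_Analysis.Complex_Analysis"
begin



lemma cqp_conv:
  fixes a c :: complex
  assumes "norm c < 1"
  shows "convergent_prod (\<lambda>j. 1 - a * c ^ j)"
proof -
  have "summable (\<lambda>j. norm a * norm c ^ j)"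
    using assms by (intro summable_mult summable_geometric) auto
  hence "summable (\<lambda>j. norm ((1 - a * c ^ j) - 1))"
    by (simp add: norm_mult norm_power)
  thus ?thesis
    by (intro abs_convergent_prod_imp_convergent_prod summable_imp_abs_convergent_prod)
qed

lemma cqp_LIMSEQ:
  fixes a c :: complex
  assumes "norm c < 1"
  shows "(\<lambda>n. \<Prod>j<n. 1 - a * c ^ j) \<longlonglongrightarrow> cqpoch_inf a c"
proof -
  have "(\<lambda>n. \<Prod>j\<le>n. 1 - a * c ^ j) \<longlonglongrightarrow> cqpoch_inf a c"
    unfolding cqpoch_inf_def by (rule convergent_prod_LIMSEQ[OF cqp_conv[OF assms]])
  hence "(\<lambda>n. \<Prod>j<Suc n. 1 - a * c ^ j) \<longlonglongrightarrow> cqpoch_inf a c"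
    by (simp add: lessThan_Suc_atMost)
  thus ?thesis by (rule LIMSEQ_imp_Suc)
qed

lemma cqp_cnj:
  fixes a :: complex and q :: real
  assumes "\<bar>q\<bar> < 1"
  shows "cnj (cqpoch_inf a (of_real q)) = cqpoch_inf (cnj a) (of_real q)"
proof -
  have n: "norm (complex_of_real q) < 1" using assms by simp
  have "(\<lambda>n. cnj (\<Prod>j<n. 1 - a * of_real q ^ j)) \<longlonglongrightarrow> cnj (cqpoch_inf a (of_real q))"
    by (intro tendsto_cnj cqp_LIMSEQ n)
  moreover have "(\<lambda>n. cnj (\<Prod>j<n. 1 - a * of_real q ^ j)) = (\<lambda>n. \<Prod>j<n. 1 - cnj a * of_real q ^ j)"
    by (simp add: cnj_prod)
  ultimately have "(\<lambda>n. \<Prod>j<n. 1 - cnj a * of_real q ^ j) \<longlonglongrightarrow> cnj (cqpoch_inf a (of_real q))"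
    by simp
  with cqp_LIMSEQ[OF n, of "cnj a"] show ?thesis using LIMSEQ_unique by blast
qed

lemma cqp_nonzero:
  fixes a c :: complex
  assumes "norm c < 1" "norm a < 1"
  shows "cqpoch_inf a c \<noteq> 0"
  unfolding cqpoch_inf_def
proof (rule prodinf_nonzero[OF cqp_conv[OF assms(1)]])
  fix i :: nat
  have "norm (a * c ^ i) \<le> norm a"
    using assms by (simp add: norm_mult norm_power mult_left_le power_le_one)
  hence "norm (a * c ^ i) < 1" using assms by linarith
  thus "1 - a * c ^ i \<noteq> 0" by auto
qed

lemma cqp_entire:
  fixes b c :: complex
  assumes "norm c < 1"
  shows "(\<lambda>w. cqpoch_inf (b * w) c) holomorphic_on UNIV"
proof -
  have "(\<lambda>w. cqpoch_inf (b * w) c) holomorphic_on ball 0 R" if R: "R > 0" for R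
  proof -
    have uc: "uniformly_convergent_on (cball 0 R) (\<lambda>N w. \<Prod>n<N. 1 + (- (b * w * c ^ n)))"
    proof (rule uniformly_convergent_on_prod)
      show "uniformly_convergent_on (cball 0 R) (\<lambda>N w. \<Sum>n<N. norm (- (b * w * c ^ n)))"
      proof (rule Weierstrass_m_test'[where M="\<lambda>n. norm b * R * norm c ^ n"])
        fix n w assume "w \<in> cball (0::complex) R"
        hence "norm w \<le> R" by simp
        thus "norm (norm (- (b * w * c ^ n))) \<le> norm b * R * norm c ^ n"
          by (simp add: norm_mult norm_power mult_right_mono mult_left_mono)
      next
        show "summable (\<lambda>n. norm b * R * norm c ^ n)"
          using assms by (intro summable_mult summable_geometric) auto
      qed
    qed (auto intro!: continuous_intros)
    hence ul: "uniform_limit (cball 0 R) (\<lambda>N w. \<Prod>n<N. 1 - b * w * c ^ n)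
                 (\<lambda>w. lim (\<lambda>N. \<Prod>n<N. 1 - b * w * c ^ n)) sequentially"
    proof -
      have "uniformly_convergent_on (cball 0 R) (\<lambda>N w. \<Prod>n<N. 1 - b * w * c ^ n)"
        using uc by (simp add: algebra_simps)
      thus ?thesis using uniformly_convergent_uniform_limit_iff by blast
    qed
    have "lim (\<lambda>N. \<Prod>n<N. 1 - b * w * c ^ n) = cqpoch_inf (b * w) c" for w
      using cqp_LIMSEQ[OF assms, of "b * w"] by (simp add: limI)
    hence ul': "uniform_limit (cball 0 R) (\<lambda>N w. \<Prod>n<N. 1 - b * w * c ^ n)
                 (\<lambda>w. cqpoch_inf (b * w) c) sequentially"
      using ul by simp
    show ?thesis
      by (rule holomorphic_uniform_limit[OF _ ul'])
         (auto intro!: always_eventually holomorphic_intros continuous_intros)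
  qed
  hence "(\<lambda>w. cqpoch_inf (b * w) c) holomorphic_on (\<Union>R\<in>{0<..}. ball 0 R)"
    by (intro holomorphic_on_UN_open) auto
  moreover have "(\<Union>R\<in>{0<..}. ball (0::complex) R) = UNIV"
  proof (intro set_eqI iffI)
    fix x :: complex
    show "x \<in> (\<Union>R\<in>{0<..}. ball (0::complex) R)"
      by (intro UN_I[of "norm x + 1"]) (auto simp: add_nonneg_pos)
  qed auto
  ultimately show ?thesis by simp
qed



definition Nf :: "real \<Rightarrow> complex \<Rightarrow> complex" where
  "Nf q w = cqpoch_inf (of_real q * w) (of_real q)"
definition Df :: "real \<Rightarrow> complex \<Rightarrow> complex" where
  "Df q w = cqpoch_inf (- of_real q * w) (of_real q)"
definition ff :: "real \<Rightarrow> complex \<Rightarrow> complex" where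
  "ff q w = Nf q w / Df q w"
definition Sf :: "complex \<Rightarrow> complex" where
  "Sf z = (z - inverse z) / (2 * \<i>)"
definition Cf :: "complex \<Rightarrow> complex" where
  "Cf z = (z + inverse z) / 2"
definition acoef :: "real \<Rightarrow> nat \<Rightarrow> real" where
  "acoef \<kappa> j = qpoch (- qpar \<kappa>) (qpar \<kappa>) j / qpoch (qpar \<kappa>) (qpar \<kappa>) j"
definition Pf :: "real \<Rightarrow> nat \<Rightarrow> complex \<Rightarrow> complex" where
  "Pf \<kappa> n z = of_real (sqrt (gam \<kappa> 1 / gam \<kappa> n)) *
     (\<Sum>j<n. of_real (acoef \<kappa> j * acoef \<kappa> (n - 1 - j)) * ((z ^ (2 * j) / z ^ (n - 1) + z ^ (n - 1) / z ^ (2 * j)) / 2))"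
definition c0 :: "real \<Rightarrow> real" where
  "c0 \<kappa> = 2 / (pi * gam \<kappa> 1) * (cmod (cqpoch_inf (of_real (qpar \<kappa>)) (of_real (qpar \<kappa>))
                 / cqpoch_inf (- of_real (qpar \<kappa>)) (of_real (qpar \<kappa>))))\<^sup>2"
definition Rf :: "real \<Rightarrow> nat \<Rightarrow> real \<Rightarrow> complex \<Rightarrow> complex" where
  "Rf \<kappa> n t z = of_real (c0 \<kappa>) * exp (of_real (- t)) * exp (of_real t * Cf z) * Pf \<kappa> n z
     * ff (qpar \<kappa>) (z ^ 2) * ff (qpar \<kappa>) (inverse z ^ 2)"
definition Rr :: "real \<Rightarrow> nat \<Rightarrow> real \<Rightarrow> real \<Rightarrow> real" where
  "Rr \<kappa> n t \<theta> = c0 \<kappa> * exp (- t) * exp (t * cos \<theta>) * Ppoly \<kappa> n \<theta> * (cmod (ff (qpar \<kappa>) (cis \<theta> ^ 2)))\<^sup>2"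

lemma Sf_cis: "Sf (cis \<theta>) = of_real (sin \<theta>)"
  by (simp add: Sf_def complex_eq_iff)

lemma Cf_cis: "Cf (cis \<theta>) = of_real (cos \<theta>)"
  by (simp add: Cf_def complex_eq_iff)

lemma Pf_cis:
  assumes "n \<ge> 1"
  shows "Pf \<kappa> n (cis \<theta>) = of_real (Ppoly \<kappa> n \<theta>)"
proof -
  have t: "(cis \<theta> ^ (2 * j) / cis \<theta> ^ (n - 1) + cis \<theta> ^ (n - 1) / cis \<theta> ^ (2 * j)) / 2
        = of_real (cos ((2 * real j - real n + 1) * \<theta>))" for j
  proof -
    have "cis \<theta> ^ (2 * j) / cis \<theta> ^ (n - 1) = cis ((2 * real j - real n + 1) * \<theta>)"
      using assms by (simp add: Complex.DeMoivre cis_divide of_nat_diff algebra_simps)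
    moreover have "cis \<theta> ^ (n - 1) / cis \<theta> ^ (2 * j) = cis (- ((2 * real j - real n + 1) * \<theta>))"
      using assms by (simp add: Complex.DeMoivre cis_divide of_nat_diff algebra_simps)
    ultimately show ?thesis by (simp add: complex_eq_iff)
  qed
  have a: "qpoch (- qpar \<kappa>) (qpar \<kappa>) k * qpoch (- qpar \<kappa>) (qpar \<kappa>) (n - 1 - k)
              / (qpoch (qpar \<kappa>) (qpar \<kappa>) k * qpoch (qpar \<kappa>) (qpar \<kappa>) (n - 1 - k))
         = acoef \<kappa> k * acoef \<kappa> (n - 1 - k)" for k
    by (simp add: acoef_def)
  show ?thesis
    unfolding Pf_def Ppoly_def t a by simp
qed

lemma ff_cnj:
  assumes "0 < q" "q < 1"
  shows "ff q (cnj w) = cnj (ff q w)"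
proof -
  have q: "\<bar>q\<bar> < 1" using assms by simp
  show ?thesis
    unfolding ff_def Nf_def Df_def using cqp_cnj[OF q, of "of_real q * w"] cqp_cnj[OF q, of "- of_real q * w"]
    by simp
qed

lemma Rf_cis:
  assumes "n \<ge> 1" "0 < qpar \<kappa>" "qpar \<kappa> < 1"
  shows "Rf \<kappa> n t (cis \<theta>) = of_real (Rr \<kappa> n t \<theta>)"
proof -
  have "ff (qpar \<kappa>) (inverse (cis \<theta>) ^ 2) = ff (qpar \<kappa>) (cnj (cis \<theta> ^ 2))" by (simp add: cis_cnj)
  also have "\<dots> = cnj (ff (qpar \<kappa>) (cis \<theta> ^ 2))" by (rule ff_cnj[OF assms(2,3)])
  finally have cj: "ff (qpar \<kappa>) (inverse (cis \<theta>) ^ 2) = cnj (ff (qpar \<kappa>) (cis \<theta> ^ 2))" .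
  have e: "ff (qpar \<kappa>) (cis \<theta> ^ 2) * ff (qpar \<kappa>) (inverse (cis \<theta>) ^ 2)
         = of_real ((cmod (ff (qpar \<kappa>) (cis \<theta> ^ 2)))\<^sup>2)"
    by (simp only: cj complex_norm_square)
  have "Rf \<kappa> n t (cis \<theta>) = of_real (c0 \<kappa>) * exp (of_real (- t)) * exp (of_real t * Cf (cis \<theta>)) * Pf \<kappa> n (cis \<theta>)
     * (ff (qpar \<kappa>) (cis \<theta> ^ 2) * ff (qpar \<kappa>) (inverse (cis \<theta>) ^ 2))"
    unfolding Rf_def by (simp add: mult.assoc)
  also have "\<dots> = of_real (Rr \<kappa> n t \<theta>)"
    unfolding e Cf_cis Pf_cis[OF assms(1)] Rr_def
    by (simp add: exp_of_real[symmetric])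
  finally show ?thesis .
qed

lemma G_eq:
  shows "exp (- t * (1 - cos \<theta>)) * Ppoly \<kappa> n \<theta> * mu_dens \<kappa> \<theta> = (sin \<theta>)\<^sup>2 * Rr \<kappa> n t \<theta>"
proof -
  have u: "exp (2 * \<i> * complex_of_real \<theta>) = cis \<theta> ^ 2"
    by (simp add: cis_conv_exp exp_double[symmetric] power2_eq_square exp_add[symmetric] algebra_simps)
  have "mu_dens \<kappa> \<theta> = c0 \<kappa> * (sin \<theta>)\<^sup>2 * (cmod (ff (qpar \<kappa>) (cis \<theta> ^ 2)))\<^sup>2"
    unfolding mu_dens_def c0_def ff_def Nf_def Df_def u
    by (simp add: norm_mult norm_divide power_mult_distrib power_divide mult_ac)
  thus ?thesis unfolding Rr_def
    by (simp add: exp_diff exp_minus field_simps right_diff_distrib)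
qed



lemma circ_integral_eq:
  fixes \<Phi> :: "complex \<Rightarrow> complex" and \<rho> :: real and m :: nat
  assumes "\<rho> > 0"
  shows "contour_integral (circlepath 0 \<rho>) (\<lambda>z. \<Phi> z * z ^ m / z)
       = \<i> * of_real \<rho> ^ m * integral {0..2*pi} (\<lambda>t. \<Phi> (of_real \<rho> * cis t) * cis t ^ m)"
proof -
  have "contour_integral (circlepath 0 \<rho>) (\<lambda>z. \<Phi> z * z ^ m / z)
      = integral {0..2*pi} (\<lambda>t. \<Phi> (0 + \<rho> * cis t) * (0 + \<rho> * cis t) ^ m / (0 + \<rho> * cis t) * \<rho> * \<i> * cis t)"
    unfolding circlepath_def by (rule contour_integral_part_circlepath_eq) simp
  also have "\<dots> = integral {0..2*pi} (\<lambda>t. (\<i> * of_real \<rho> ^ m) * (\<Phi> (of_real \<rho> * cis t) * cis t ^ m))"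
    using assms by (intro integral_cong) (auto simp: field_simps power_mult_distrib)
  also have "\<dots> = \<i> * of_real \<rho> ^ m * integral {0..2*pi} (\<lambda>t. \<Phi> (of_real \<rho> * cis t) * cis t ^ m)"
    by (rule integral_mult_right)
  finally show ?thesis .
qed

lemma fourier_shift:
  fixes \<Phi> :: "complex \<Rightarrow> complex" and r :: real and m :: nat
  assumes holo: "\<Phi> holomorphic_on S" and S: "open S"
    and sub: "{z. r \<le> norm z \<and> norm z \<le> 1} \<subseteq> S" and r: "0 < r" "r < 1"
  shows "integral {0..2*pi} (\<lambda>t. \<Phi> (cis t) * cis t ^ m)
       = of_real r ^ m * integral {0..2*pi} (\<lambda>t. \<Phi> (of_real r * cis t) * cis t ^ m)"
proof -
  define S' where "S' = S - {0}"
  have S': "open S'" unfolding S'_def using S by (intro open_Diff) auto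
  have h: "(\<lambda>z. \<Phi> z * z ^ m / z) holomorphic_on S'"
    unfolding S'_def by (intro holomorphic_intros holomorphic_on_subset[OF holo]) auto
  have hom: "homotopic_loops S' (circlepath 0 1) (circlepath 0 r)"
  proof (rule homotopic_loops_linear)
    fix t x assume t: "t \<in> {0..1::real}"
    show "closed_segment (circlepath 0 1 t) (circlepath 0 r t) \<subseteq> S'"
    proof
      fix y assume "y \<in> closed_segment (circlepath 0 1 t) (circlepath 0 r t)"
      then obtain u where u: "0 \<le> u" "u \<le> 1"
        and y: "y = (1 - u) *\<^sub>R circlepath 0 1 t + u *\<^sub>R circlepath 0 r t"
        unfolding closed_segment_def by auto
      define e where "e = exp (2 * of_real pi * \<i> * of_real t)"
      have ne: "norm e = 1" unfolding e_def by (simp add: norm_exp_eq_Re)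
      have "y = of_real ((1 - u) + u * r) * e"
        unfolding y circlepath e_def by (simp add: scaleR_conv_of_real algebra_simps)
      hence "norm y = norm (complex_of_real ((1 - u) + u * r)) * norm e"
        by (simp only: norm_mult)
      hence ny: "norm y = (1 - u) + u * r"
        using ne u r by (simp only: norm_of_real) (simp add: add_nonneg_nonneg)
      have "0 \<le> (1 - u) * (1 - r)" using u r by (intro mult_nonneg_nonneg) auto
      hence "r \<le> (1 - u) + u * r" by (simp add: algebra_simps)
      moreover have "u * r \<le> u" using u r by (intro mult_left_le) auto
      hence "(1 - u) + u * r \<le> 1" by simp
      ultimately have "y \<in> S" using sub ny by auto
      moreover have "y \<noteq> 0" using ny r \<open>r \<le> (1 - u) + u * r\<close> by auto
      ultimately show "y \<in> S'" unfolding S'_def by auto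
    qed
  qed auto
  have "contour_integral (circlepath 0 1) (\<lambda>z. \<Phi> z * z ^ m / z)
      = contour_integral (circlepath 0 r) (\<lambda>z. \<Phi> z * z ^ m / z)"
    by (rule Cauchy_theorem_homotopic_loops[OF hom S' h]) auto
  thus ?thesis
    using circ_integral_eq[of 1 \<Phi> m] circ_integral_eq[of r \<Phi> m] r by simp
qed

lemma fourier_decay:
  fixes \<Phi> :: "complex \<Rightarrow> complex" and r :: real
  assumes holo: "\<Phi> holomorphic_on S" and S: "open S"
    and sub: "{z. r \<le> norm z \<and> norm z \<le> 1} \<subseteq> S" and r: "0 < r" "r < 1"
  shows "\<exists>M. \<forall>m::nat. norm (integral {0..2*pi} (\<lambda>t. \<Phi> (cis t) * cis t ^ m)) \<le> M * r ^ m"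
proof -
  have cont: "continuous_on S \<Phi>" using holo by (rule holomorphic_on_imp_continuous_on)
  have csub: "(\<lambda>t. of_real r * cis t) ` {0..2*pi} \<subseteq> S"
    using sub r by (auto simp: norm_mult)
  have cc: "continuous_on {0..2*pi} (\<lambda>t. \<Phi> (of_real r * cis t))"
    by (rule continuous_on_compose2[OF cont _ csub]) (auto intro!: continuous_intros simp: cis_conv_exp)
  have "compact ((\<lambda>t. \<Phi> (of_real r * cis t)) ` {0..2*pi})"
    by (rule compact_continuous_image[OF cc]) simp
  then obtain B where B: "\<And>t. t \<in> {0..2*pi} \<Longrightarrow> norm (\<Phi> (of_real r * cis t)) \<le> B"
    using compact_imp_bounded bounded_iff by (metis imageI)
  show ?thesis
  proof (intro exI allI)
    fix m :: nat
    have "norm (integral {0..2*pi} (\<lambda>t. \<Phi> (of_real r * cis t) * cis t ^ m)) \<le> B * (2*pi - 0)"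
    proof (rule integral_bound)
      show "continuous_on {0..2*pi} (\<lambda>t. \<Phi> (of_real r * cis t) * cis t ^ m)"
        using cc by (auto intro!: continuous_intros simp: cis_conv_exp)
      show "\<And>x. x \<in> {0..2 * pi} \<Longrightarrow> norm (\<Phi> (complex_of_real r * cis x) * cis x ^ m) \<le> B"
        using B by (simp add: norm_mult norm_power)
    qed simp
    hence "norm (integral {0..2*pi} (\<lambda>t. \<Phi> (of_real r * cis t) * cis t ^ m)) \<le> B * (2*pi)"
      by simp
    thus "norm (integral {0..2*pi} (\<lambda>t. \<Phi> (cis t) * cis t ^ m)) \<le> (B * (2*pi)) * r ^ m"
      using fourier_shift[OF holo S sub r, of m] r
      by (simp add: norm_mult norm_power mult.commute mult_left_mono)
  qed
qed



lemma int_fold: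
  fixes h :: "real \<Rightarrow> complex"
  assumes cont: "continuous_on UNIV h"
  shows "integral {0..2*pi} h = integral {0..pi} (\<lambda>t. h t + h (2*pi - t))"
proof -
  have ci: "h integrable_on {a..b}" for a b
    by (rule integrable_continuous_real) (rule continuous_on_subset[OF cont], simp)
  have "(h has_integral integral {pi..2*pi} h) {pi..2*pi}"
    using ci by (rule integrable_integral)
  hence "(h has_integral integral {pi..2*pi} h) {-pi + 2*pi..0 + 2*pi}" by simp
  hence "((h \<circ> (+) (2*pi)) has_integral integral {pi..2*pi} h) {-pi..0}"
    by (subst has_integral_shift_Icc_real) 
  hence "((\<lambda>x. (h \<circ> (+) (2*pi)) (- x)) has_integral integral {pi..2*pi} h) {-0..-(-pi)}"
    by (subst has_integral_reflect_real)
  hence r: "((\<lambda>x. h (2*pi - x)) has_integral integral {pi..2*pi} h) {0..pi}"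
    by (simp add: o_def)
  have "integral {0..2*pi} h = integral {0..pi} h + integral {pi..2*pi} h"
    by (rule Henstock_Kurzweil_Integration.integral_combine[symmetric]) (use ci pi_gt_zero in auto)
  also have "\<dots> = integral {0..pi} (\<lambda>t. h t + h (2*pi - t))"
    using integral_add[OF ci[of 0 pi] has_integral_integrable[OF r]] integral_unique[OF r] by simp
  finally show ?thesis .
qed

lemma fold_even:
  fixes \<Phi> :: "complex \<Rightarrow> complex" and g :: "real \<Rightarrow> real" and m :: nat
  assumes cont: "continuous_on UNIV (\<lambda>t. \<Phi> (cis t))"
    and sym: "\<And>t. \<Phi> (cis (- t)) = \<Phi> (cis t)"
    and re: "\<And>t. \<Phi> (cis t) = of_real (g t)"
  shows "integral {0..2*pi} (\<lambda>t. \<Phi> (cis t) * cis t ^ m) = 2 * of_real (integral {0..pi} (\<lambda>t. g t * cos (m * t)))"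
proof -
  have gc: "continuous_on UNIV g"
  proof -
    have "continuous_on UNIV (\<lambda>t. Re (\<Phi> (cis t)))" by (intro continuous_intros cont)
    thus ?thesis using re by simp
  qed
  have "integral {0..2*pi} (\<lambda>t. \<Phi> (cis t) * cis t ^ m)
      = integral {0..pi} (\<lambda>t. \<Phi> (cis t) * cis t ^ m + \<Phi> (cis (2*pi - t)) * cis (2*pi - t) ^ m)"
  proof (rule int_fold)
    have "continuous_on UNIV (\<lambda>t. cis t ^ m)" by (auto intro!: continuous_intros simp: cis_conv_exp)
    thus "continuous_on UNIV (\<lambda>t. \<Phi> (cis t) * cis t ^ m)" by (intro continuous_on_mult cont)
  qed
  also have "\<dots> = integral {0..pi} (\<lambda>t. of_real (2 * (g t * cos (m * t))))"
  proof (rule integral_cong)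
    fix t :: real
    have c2: "cis (2*pi - t) = cis (- t)" by (simp add: cis.ctr complex_eq_iff)
    have "\<Phi> (cis t) * cis t ^ m + \<Phi> (cis (2*pi - t)) * cis (2*pi - t) ^ m
        = of_real (g t) * (cis (m * t) + cis (- (m * t)))"
    proof -
      have d1: "cis t ^ m = cis (m * t)" by (rule Complex.DeMoivre)
      have d2: "cis (- t) ^ m = cis (- (m * t))" using Complex.DeMoivre[of "-t" m] by simp
      show ?thesis unfolding c2 d1 d2 using sym[of t] re[of t] by (simp add: algebra_simps)
    qed
    also have "cis (m * t) + cis (- (m * t)) = of_real (2 * cos (m * t))"
      by (simp add: complex_eq_iff)
    finally show "\<Phi> (cis t) * cis t ^ m + \<Phi> (cis (2*pi - t)) * cis (2*pi - t) ^ m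
        = of_real (2 * (g t * cos (m * t)))" by simp
  qed
  also have "\<dots> = of_real (integral {0..pi} (\<lambda>t. 2 * (g t * cos (m * t))))"
    by (rule integral_unique[OF has_integral_of_real[OF integrable_integral]])
       (auto intro!: integrable_continuous_real continuous_intros continuous_on_subset[OF gc])
  also have "\<dots> = 2 * of_real (integral {0..pi} (\<lambda>t. g t * cos (m * t)))"
    by simp
  finally show ?thesis .
qed

lemma fold_odd:
  fixes \<Phi> :: "complex \<Rightarrow> complex" and g :: "real \<Rightarrow> real" and m :: nat
  assumes cont: "continuous_on UNIV (\<lambda>t. \<Phi> (cis t))"
    and sym: "\<And>t. \<Phi> (cis (- t)) = - \<Phi> (cis t)"
    and re: "\<And>t. \<Phi> (cis t) = of_real (g t)"
  shows "integral {0..2*pi} (\<lambda>t. \<Phi> (cis t) * cis t ^ m) = 2 * \<i> * of_real (integral {0..pi} (\<lambda>t. g t * sin (m * t)))"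
proof -
  have gc: "continuous_on UNIV g"
  proof -
    have "continuous_on UNIV (\<lambda>t. Re (\<Phi> (cis t)))" by (intro continuous_intros cont)
    thus ?thesis using re by simp
  qed
  have "integral {0..2*pi} (\<lambda>t. \<Phi> (cis t) * cis t ^ m)
      = integral {0..pi} (\<lambda>t. \<Phi> (cis t) * cis t ^ m + \<Phi> (cis (2*pi - t)) * cis (2*pi - t) ^ m)"
  proof (rule int_fold)
    have "continuous_on UNIV (\<lambda>t. cis t ^ m)" by (auto intro!: continuous_intros simp: cis_conv_exp)
    thus "continuous_on UNIV (\<lambda>t. \<Phi> (cis t) * cis t ^ m)" by (intro continuous_on_mult cont)
  qed
  also have "\<dots> = integral {0..pi} (\<lambda>t. \<i> * of_real (2 * (g t * sin (m * t))))"
  proof (rule integral_cong)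
    fix t :: real
    have c2: "cis (2*pi - t) = cis (- t)" by (simp add: cis.ctr complex_eq_iff)
    have "\<Phi> (cis t) * cis t ^ m + \<Phi> (cis (2*pi - t)) * cis (2*pi - t) ^ m
        = of_real (g t) * (cis (m * t) - cis (- (m * t)))"
    proof -
      have d1: "cis t ^ m = cis (m * t)" by (rule Complex.DeMoivre)
      have d2: "cis (- t) ^ m = cis (- (m * t))" using Complex.DeMoivre[of "-t" m] by simp
      show ?thesis unfolding c2 d1 d2 using sym[of t] re[of t] by (simp add: algebra_simps)
    qed
    also have "cis (m * t) - cis (- (m * t)) = \<i> * of_real (2 * sin (m * t))"
      by (simp add: complex_eq_iff)
    finally show "\<Phi> (cis t) * cis t ^ m + \<Phi> (cis (2*pi - t)) * cis (2*pi - t) ^ m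
        = \<i> * of_real (2 * (g t * sin (m * t)))" by simp
  qed
  also have "\<dots> = \<i> * integral {0..pi} (\<lambda>t. of_real (2 * (g t * sin (m * t))))"
    by (rule integral_mult_right)
  also have "integral {0..pi} (\<lambda>t. complex_of_real (2 * (g t * sin (m * t)))) = complex_of_real (integral {0..pi} (\<lambda>t. 2 * (g t * sin (m * t))))"
    by (rule integral_unique[OF has_integral_of_real[OF integrable_integral]])
       (auto intro!: integrable_continuous_real continuous_intros continuous_on_subset[OF gc])
  finally show ?thesis by simp
qed



lemma Rf_inv:
  assumes "z \<noteq> 0"
  shows "Rf \<kappa> n t (inverse z) = Rf \<kappa> n t z"
proof -
  have pw: "inverse z ^ a / inverse z ^ b = z ^ b / z ^ a" for a b
    by (simp add: power_inverse divide_inverse mult.commute)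
  have "Pf \<kappa> n (inverse z) = Pf \<kappa> n z"
    unfolding Pf_def pw by (simp add: add.commute)
  moreover have "Cf (inverse z) = Cf z" by (simp add: Cf_def add.commute)
  ultimately show ?thesis unfolding Rf_def by (simp add: mult_ac)
qed

lemma Sf_inv: "Sf (inverse z) = - Sf z"
proof -
  have "inverse z - inverse (inverse z) = - (z - inverse z)" by simp
  thus ?thesis unfolding Sf_def by (simp only: minus_divide_left)
qed

definition Ann :: "real \<Rightarrow> complex set" where
  "Ann q = {z. sqrt q < norm z \<and> norm z < 1 / sqrt q}"

lemma open_Ann: "open (Ann q)"
proof -
  have "Ann q = norm -` {sqrt q<..<1 / sqrt q}" unfolding Ann_def by auto
  thus ?thesis by (simp add: continuous_open_vimage)
qed

lemma Nf_hol:
  assumes "0 < q" "q < 1" "g holomorphic_on A"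
  shows "(\<lambda>z. Nf q (g z)) holomorphic_on A"
proof -
  have n: "norm (complex_of_real q) < 1" using assms by simp
  have "Nf q holomorphic_on UNIV"
    unfolding Nf_def[abs_def] by (rule cqp_entire[OF n])
  hence "Nf q holomorphic_on (g ` A)" by (rule holomorphic_on_subset) simp
  hence "(Nf q \<circ> g) holomorphic_on A"
    by (rule holomorphic_on_compose[OF assms(3)])
  thus ?thesis by (simp add: comp_def)
qed

lemma Df_hol:
  assumes "0 < q" "q < 1" "g holomorphic_on A"
  shows "(\<lambda>z. Df q (g z)) holomorphic_on A"
proof -
  have n: "norm (complex_of_real q) < 1" using assms by simp
  have "Df q holomorphic_on UNIV"
    unfolding Df_def[abs_def] by (rule cqp_entire[OF n])
  hence "Df q holomorphic_on (g ` A)" by (rule holomorphic_on_subset) simp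
  hence "(Df q \<circ> g) holomorphic_on A"
    by (rule holomorphic_on_compose[OF assms(3)])
  thus ?thesis by (simp add: comp_def)
qed

lemma Df_nz:
  assumes "0 < q" "q < 1" "q * norm w < 1"
  shows "Df q w \<noteq> 0"
  unfolding Df_def using assms by (intro cqp_nonzero) (auto simp: norm_mult)

lemma Ann_facts:
  assumes "0 < q" "q < 1" "z \<in> Ann q"
  shows "z \<noteq> 0" "q * norm (z ^ 2) < 1" "q * norm (inverse z ^ 2) < 1"
proof -
  have s: "0 < sqrt q" "sqrt q * sqrt q = q" using assms by auto
  have z1: "sqrt q < norm z" "norm z < 1 / sqrt q" using assms(3) unfolding Ann_def by auto
  thus "z \<noteq> 0" using s by auto
  have "sqrt q * norm z < 1" using z1 s by (simp add: field_simps)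
  hence "(sqrt q * norm z) * (sqrt q * norm z) < 1 * 1"
    using s z1 by (intro mult_strict_mono') auto
  moreover have "(sqrt q * norm z) * (sqrt q * norm z) = (sqrt q * sqrt q) * (norm z * norm z)"
    by (simp only: mult_ac)
  ultimately show "q * norm (z ^ 2) < 1" using s by (simp add: norm_power norm_mult power2_eq_square)
  have "sqrt q < norm z" by fact
  hence "sqrt q < 1 / norm (inverse z)" using s \<open>z \<noteq> 0\<close> by (simp add: norm_inverse divide_inverse)
  hence "sqrt q * norm (inverse z) < 1" using s \<open>z \<noteq> 0\<close> by (simp add: pos_less_divide_eq)
  hence "(sqrt q * norm (inverse z)) * (sqrt q * norm (inverse z)) < 1 * 1"
    using s by (intro mult_strict_mono') auto
  moreover have "(sqrt q * norm (inverse z)) * (sqrt q * norm (inverse z)) = (sqrt q * sqrt q) * (norm (inverse z) * norm (inverse z))"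
    by (simp only: mult_ac)
  ultimately show "q * norm (inverse z ^ 2) < 1" using s by (simp add: norm_power norm_mult power2_eq_square del: norm_inverse)
qed

lemma Rf_hol:
  assumes "0 < qpar \<kappa>" "qpar \<kappa> < 1"
  shows "Rf \<kappa> n t holomorphic_on Ann (qpar \<kappa>)"
proof -
  let ?q = "qpar \<kappa>"
  have nz: "z \<noteq> 0" "Df ?q (z ^ 2) \<noteq> 0" "Df ?q (inverse z ^ 2) \<noteq> 0" if "z \<in> Ann ?q" for z
    using Ann_facts[OF assms that] Df_nz[OF assms] by auto
  have h1: "(\<lambda>z. Nf ?q (z ^ 2)) holomorphic_on Ann ?q" "(\<lambda>z. Df ?q (z ^ 2)) holomorphic_on Ann ?q"
    by (intro Nf_hol Df_hol assms holomorphic_intros)+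
  have h2: "(\<lambda>z. Nf ?q (inverse z ^ 2)) holomorphic_on Ann ?q" "(\<lambda>z. Df ?q (inverse z ^ 2)) holomorphic_on Ann ?q"
    by (intro Nf_hol Df_hol assms holomorphic_intros; use nz in auto)+
  have hf: "(\<lambda>z. ff ?q (z ^ 2)) holomorphic_on Ann ?q" "(\<lambda>z. ff ?q (inverse z ^ 2)) holomorphic_on Ann ?q"
    unfolding ff_def using nz
    by (intro holomorphic_on_divide h1 h2; blast)+
  have nz0: "\<And>z. z \<in> Ann ?q \<Longrightarrow> z \<noteq> 0" using nz by blast
  have hP: "Pf \<kappa> n holomorphic_on Ann ?q"
    unfolding Pf_def by (intro holomorphic_intros) (auto dest: nz0)
  have hC: "Cf holomorphic_on Ann ?q"
    unfolding Cf_def by (intro holomorphic_intros) (auto dest: nz0)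
  have "(\<lambda>z. of_real (c0 \<kappa>) * exp (of_real (- t)) * exp (of_real t * Cf z) * Pf \<kappa> n z
     * ff (qpar \<kappa>) (z ^ 2) * ff (qpar \<kappa>) (inverse z ^ 2)) holomorphic_on Ann ?q"
    by (intro holomorphic_intros hf hP hC)
  thus ?thesis unfolding Rf_def[abs_def] by simp
qed



definition rad :: "real \<Rightarrow> real" where "rad \<kappa> = (sqrt (qpar \<kappa>) + 1) / 2"

lemma qpar_bounds: "\<kappa> > 0 \<Longrightarrow> 0 < qpar \<kappa> \<and> qpar \<kappa> < 1"
  by (simp add: qpar_def)

lemma rad_bounds:
  assumes "\<kappa> > 0"
  shows "sqrt (qpar \<kappa>) < rad \<kappa>" "rad \<kappa> < 1" "0 < rad \<kappa>" "qpar \<kappa> < rad \<kappa>"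
proof -
  have q: "0 < qpar \<kappa>" "qpar \<kappa> < 1" using qpar_bounds[OF assms] by auto
  have s: "sqrt (qpar \<kappa>) < 1" "0 < sqrt (qpar \<kappa>)" using q by auto
  show "sqrt (qpar \<kappa>) < rad \<kappa>" "rad \<kappa> < 1" using s by (auto simp: rad_def)
  have "0 < sqrt (qpar \<kappa>) + 1" using s by linarith
  thus "0 < rad \<kappa>" unfolding rad_def by simp
  have "qpar \<kappa> = sqrt (qpar \<kappa>) * sqrt (qpar \<kappa>)" using q by simp
  also have "\<dots> < sqrt (qpar \<kappa>) * 1" using s by (intro mult_strict_left_mono) auto
  finally show "qpar \<kappa> < rad \<kappa>" using \<open>sqrt (qpar \<kappa>) < rad \<kappa>\<close> by simp
qed

lemma sub_Ann:
  assumes "\<kappa> > 0"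
  shows "{z. rad \<kappa> \<le> norm z \<and> norm z \<le> 1} \<subseteq> Ann (qpar \<kappa>)"
proof -
  have q: "0 < qpar \<kappa>" "qpar \<kappa> < 1" using qpar_bounds[OF assms] by auto
  have s: "sqrt (qpar \<kappa>) < 1" "0 < sqrt (qpar \<kappa>)" using q by auto
  have "1 < 1 / sqrt (qpar \<kappa>)" using s by simp
  thus ?thesis using rad_bounds[OF assms] unfolding Ann_def by auto
qed

lemma cis_Ann:
  assumes "\<kappa> > 0"
  shows "cis t \<in> Ann (qpar \<kappa>)"
  using sub_Ann[OF assms] rad_bounds[OF assms] by auto

lemma Sf_hol: "0 < q \<Longrightarrow> q < 1 \<Longrightarrow> Sf holomorphic_on Ann q"
proof -
  assume "0 < q" "q < 1"
  hence nz: "\<And>z. z \<in> Ann q \<Longrightarrow> z \<noteq> 0" using Ann_facts by blast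
  show ?thesis unfolding Sf_def[abs_def] by (intro holomorphic_intros) (auto dest: nz)
qed

lemma cont_circ:
  assumes "\<kappa> > 0" "\<Phi> holomorphic_on Ann (qpar \<kappa>)"
  shows "continuous_on UNIV (\<lambda>t. \<Phi> (cis t))"
proof -
  have c: "continuous_on (Ann (qpar \<kappa>)) \<Phi>" using assms(2) by (rule holomorphic_on_imp_continuous_on)
  have "continuous_on UNIV cis" by (simp add: cis_conv_exp[abs_def] continuous_intros)
  thus ?thesis using continuous_on_compose2[OF c, of UNIV cis] cis_Ann[OF assms(1)] by auto
qed

lemma B1:
  assumes "\<kappa> > 0" "n \<ge> 1"
  shows "\<exists>M. \<forall>m::nat. \<bar>integral {0..pi} (\<lambda>\<theta>. (sin \<theta>)\<^sup>2 * Rr \<kappa> n t \<theta> * cos (m * \<theta>))\<bar> \<le> M * rad \<kappa> ^ m"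
proof -
  let ?q = "qpar \<kappa>"
  have q: "0 < ?q" "?q < 1" using qpar_bounds[OF assms(1)] by auto
  define \<Phi> where "\<Phi> = (\<lambda>z. Sf z ^ 2 * Rf \<kappa> n t z)"
  have hol: "\<Phi> holomorphic_on Ann ?q"
    unfolding \<Phi>_def by (intro holomorphic_intros Sf_hol Rf_hol q)
  obtain M where M: "\<And>m::nat. norm (integral {0..2*pi} (\<lambda>t. \<Phi> (cis t) * cis t ^ m)) \<le> M * rad \<kappa> ^ m"
    using fourier_decay[OF hol open_Ann sub_Ann[OF assms(1)] rad_bounds(3,2)[OF assms(1)]] by blast
  have re: "\<Phi> (cis \<theta>) = of_real ((sin \<theta>)\<^sup>2 * Rr \<kappa> n t \<theta>)" for \<theta>
    unfolding \<Phi>_def Sf_cis Rf_cis[OF assms(2) q] by simp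
  have sym: "\<Phi> (cis (- \<theta>)) = \<Phi> (cis \<theta>)" for \<theta>
  proof -
    have e: "cis (- \<theta>) = inverse (cis \<theta>)" by simp
    have nz: "cis \<theta> \<noteq> 0" by (metis cis_inverse cis_zero inverse_zero mult_zero_left one_neq_zero right_inverse cis_mult add.right_inverse)
    show ?thesis unfolding \<Phi>_def e Sf_inv Rf_inv[OF nz] by simp
  qed
  show ?thesis
  proof (intro exI allI)
    fix m :: nat
    have "integral {0..2*pi} (\<lambda>t. \<Phi> (cis t) * cis t ^ m)
       = 2 * of_real (integral {0..pi} (\<lambda>\<theta>. (sin \<theta>)\<^sup>2 * Rr \<kappa> n t \<theta> * cos (m * \<theta>)))"
      by (rule fold_even[OF cont_circ[OF assms(1) hol] sym re])
    hence "2 * \<bar>integral {0..pi} (\<lambda>\<theta>. (sin \<theta>)\<^sup>2 * Rr \<kappa> n t \<theta> * cos (m * \<theta>))\<bar> \<le> M * rad \<kappa> ^ m"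
      using M[of m] by (simp add: norm_mult)
    thus "\<bar>integral {0..pi} (\<lambda>\<theta>. (sin \<theta>)\<^sup>2 * Rr \<kappa> n t \<theta> * cos (m * \<theta>))\<bar> \<le> (M / 2) * rad \<kappa> ^ m"
      by simp
  qed
qed

lemma B2:
  assumes "\<kappa> > 0" "n \<ge> 1"
  shows "\<exists>M. \<forall>m::nat. \<bar>integral {0..pi} (\<lambda>\<theta>. sin \<theta> * Rr \<kappa> n t \<theta> * sin (m * \<theta>))\<bar> \<le> M * rad \<kappa> ^ m"
proof -
  let ?q = "qpar \<kappa>"
  have q: "0 < ?q" "?q < 1" using qpar_bounds[OF assms(1)] by auto
  define \<Phi> where "\<Phi> = (\<lambda>z. Sf z * Rf \<kappa> n t z)"
  have hol: "\<Phi> holomorphic_on Ann ?q"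
    unfolding \<Phi>_def by (intro holomorphic_intros Sf_hol Rf_hol q)
  obtain M where M: "\<And>m::nat. norm (integral {0..2*pi} (\<lambda>t. \<Phi> (cis t) * cis t ^ m)) \<le> M * rad \<kappa> ^ m"
    using fourier_decay[OF hol open_Ann sub_Ann[OF assms(1)] rad_bounds(3,2)[OF assms(1)]] by blast
  have re: "\<Phi> (cis \<theta>) = of_real (sin \<theta> * Rr \<kappa> n t \<theta>)" for \<theta>
    unfolding \<Phi>_def Sf_cis Rf_cis[OF assms(2) q] by simp
  have sym: "\<Phi> (cis (- \<theta>)) = - \<Phi> (cis \<theta>)" for \<theta>
  proof -
    have e: "cis (- \<theta>) = inverse (cis \<theta>)" by simp
    have nz: "cis \<theta> \<noteq> 0" by (metis cis_inverse cis_zero inverse_zero mult_zero_left one_neq_zero right_inverse cis_mult add.right_inverse)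
    show ?thesis unfolding \<Phi>_def e Sf_inv Rf_inv[OF nz] by simp
  qed
  show ?thesis
  proof (intro exI allI)
    fix m :: nat
    have "integral {0..2*pi} (\<lambda>t. \<Phi> (cis t) * cis t ^ m)
       = 2 * \<i> * of_real (integral {0..pi} (\<lambda>\<theta>. sin \<theta> * Rr \<kappa> n t \<theta> * sin (m * \<theta>)))"
      by (rule fold_odd[OF cont_circ[OF assms(1) hol] sym re])
    hence "2 * \<bar>integral {0..pi} (\<lambda>\<theta>. sin \<theta> * Rr \<kappa> n t \<theta> * sin (m * \<theta>))\<bar> \<le> M * rad \<kappa> ^ m"
      using M[of m] by (simp add: norm_mult)
    thus "\<bar>integral {0..pi} (\<lambda>\<theta>. sin \<theta> * Rr \<kappa> n t \<theta> * sin (m * \<theta>))\<bar> \<le> (M / 2) * rad \<kappa> ^ m"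
      by simp
  qed
qed



lemma qpoch_Suc: "qpoch a q (Suc n) = qpoch a q n * (1 - a * q ^ n)"
  by (simp add: qpoch_def)

lemma qpoch_pos:
  assumes "0 < q" "q < 1"
  shows "qpoch q q n > 0" "qpoch (- q) q n > 0"
proof -
  have "q * q ^ i < 1" for i :: nat
  proof -
    have "q * q ^ i \<le> q" using assms by (simp add: mult_left_le power_le_one)
    thus ?thesis using assms by linarith
  qed
  thus "qpoch q q n > 0" unfolding qpoch_def by (intro prod_pos) auto
  show "qpoch (- q) q n > 0" unfolding qpoch_def using assms by (intro prod_pos) (auto intro!: add_pos_nonneg)
qed

context
  fixes \<kappa> :: real
  assumes kpos: "\<kappa> > 0"
begin

definition "qq = qpar \<kappa>"
definition "dd = 2 / (1 - qq)"
definition "BB = exp (dd / (1 - qq))"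
definition "CC = BB * (dd / (1 - qq)) * BB"

lemma qq: "0 < qq" "qq < 1" unfolding qq_def using qpar_bounds[OF kpos] by auto

lemma acoef_Suc: "acoef \<kappa> (Suc j) = acoef \<kappa> j * ((1 + qq ^ Suc j) / (1 - qq ^ Suc j))"
  unfolding acoef_def qpoch_Suc qq_def[symmetric] by (simp add: field_simps)

lemma acoef_pos: "acoef \<kappa> j > 0"
  unfolding acoef_def qq_def[symmetric] using qpoch_pos[OF qq] by simp

lemma qpow: "qq * qq ^ i < 1" "0 < qq * qq ^ i" "qq * qq ^ i \<le> qq ^ i"
proof -
  have "qq * qq ^ i \<le> qq" using qq by (intro mult_left_le) (auto simp: power_le_one)
  thus "qq * qq ^ i < 1" using qq by linarith
  show "0 < qq * qq ^ i" using qq by simp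
  show "qq * qq ^ i \<le> qq ^ i" using qq by (intro mult_left_le_one_le) auto
qed

lemma ratio_pos: "0 \<le> (1 + qq * qq ^ i) / (1 - qq * qq ^ i)"
  using qpow[of i] by simp

lemma ratio_le: "(1 + qq ^ Suc i) / (1 - qq ^ Suc i) \<le> exp (dd * qq ^ i)"
proof -
  have p: "qq ^ Suc i \<le> qq" "qq ^ Suc i > 0" "qq ^ Suc i \<le> qq ^ i" "qq ^ Suc i < 1"
    using qq qpow[of i] by (auto intro: mult_left_le simp: power_le_one)
  hence d: "1 - qq ^ Suc i \<ge> 1 - qq" by linarith
  have "(1 + qq ^ Suc i) / (1 - qq ^ Suc i) = 1 + 2 * qq ^ Suc i / (1 - qq ^ Suc i)"
  proof -
    have "1 - qq ^ Suc i \<noteq> 0" using p by simp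
    thus ?thesis by (simp add: field_simps del: power_Suc)
  qed
  also have "2 * qq ^ Suc i / (1 - qq ^ Suc i) \<le> 2 * qq ^ Suc i / (1 - qq)"
    using d p qq by (intro divide_left_mono) auto
  also have "2 * qq ^ Suc i / (1 - qq) \<le> dd * qq ^ i"
    unfolding dd_def using p qq by (simp add: divide_right_mono)
  finally have "(1 + qq ^ Suc i) / (1 - qq ^ Suc i) \<le> 1 + dd * qq ^ i" by simp
  also have "\<dots> \<le> exp (dd * qq ^ i)" by (rule exp_ge_add_one_self)
  finally show ?thesis .
qed

lemma acoef_mono_Suc: "acoef \<kappa> j \<le> acoef \<kappa> (Suc j)"
proof -
  have "1 \<le> (1 + qq ^ Suc j) / (1 - qq ^ Suc j)"
  proof -
    have "qq ^ Suc j < 1" "0 < qq ^ Suc j" using qpow[of j] by auto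
    thus ?thesis by (simp add: field_simps)
  qed
  hence "acoef \<kappa> j * 1 \<le> acoef \<kappa> j * ((1 + qq ^ Suc j) / (1 - qq ^ Suc j))"
    using acoef_pos[of j] by (intro mult_left_mono) auto
  thus ?thesis unfolding acoef_Suc by simp
qed

lemma acoef_mono: "j \<le> j' \<Longrightarrow> acoef \<kappa> j \<le> acoef \<kappa> j'"
  by (induction j' rule: dec_induct) (auto intro: order.trans[OF _ acoef_mono_Suc])

lemma acoef_step: "acoef \<kappa> (j + k) \<le> acoef \<kappa> j * exp (dd * qq ^ j * (1 - qq ^ k) / (1 - qq))"
proof (induction k)
  case 0 thus ?case by simp
next
  case (Suc k)
  have "acoef \<kappa> (j + Suc k) = acoef \<kappa> (j + k) * ((1 + qq ^ Suc (j + k)) / (1 - qq ^ Suc (j + k)))"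
    by (simp add: acoef_Suc)
  also have "\<dots> \<le> (acoef \<kappa> j * exp (dd * qq ^ j * (1 - qq ^ k) / (1 - qq))) * exp (dd * qq ^ (j + k))"
    using Suc.IH ratio_le[of "j + k"] acoef_pos[of "j + k"] ratio_pos[of "j + k"]
    by (intro mult_mono) (auto simp: less_imp_le)
  also have "\<dots> = acoef \<kappa> j * exp (dd * qq ^ j * (1 - qq ^ Suc k) / (1 - qq))"
  proof -
    have "dd * qq ^ j * (1 - qq ^ k) / (1 - qq) + dd * qq ^ (j + k) = dd * qq ^ j * (1 - qq ^ Suc k) / (1 - qq)"
      using qq by (simp add: field_simps power_add)
    thus ?thesis by (simp add: exp_add[symmetric] mult.assoc)
  qed
  finally show ?case .
qed

lemma acoef_le: "j \<le> j' \<Longrightarrow> acoef \<kappa> j' \<le> acoef \<kappa> j * exp (dd * qq ^ j / (1 - qq))"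
proof -
  assume "j \<le> j'"
  then obtain k where k: "j' = j + k" using le_Suc_ex by blast
  have "dd * qq ^ j * (1 - qq ^ k) / (1 - qq) \<le> dd * qq ^ j / (1 - qq)"
    using qq unfolding dd_def by (intro divide_right_mono mult_left_le) auto
  hence "exp (dd * qq ^ j * (1 - qq ^ k) / (1 - qq)) \<le> exp (dd * qq ^ j / (1 - qq))" by simp
  hence "acoef \<kappa> j * exp (dd * qq ^ j * (1 - qq ^ k) / (1 - qq)) \<le> acoef \<kappa> j * exp (dd * qq ^ j / (1 - qq))"
    using acoef_pos[of j] by (intro mult_left_mono) auto
  thus ?thesis unfolding k using acoef_step[of j k] by linarith
qed

lemma dd_pos: "dd > 0" unfolding dd_def using qq by simp

lemma acoef_bound: "acoef \<kappa> j \<le> BB"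
proof -
  have "acoef \<kappa> j \<le> acoef \<kappa> 0 * exp (dd * qq ^ 0 / (1 - qq))" by (rule acoef_le) simp
  thus ?thesis unfolding BB_def by (simp add: acoef_def qpoch_def)
qed

lemma acoef_diff: "j \<le> j' \<Longrightarrow> \<bar>acoef \<kappa> j' - acoef \<kappa> j\<bar> \<le> CC * qq ^ j"
proof -
  assume jj: "j \<le> j'"
  define x where "x = dd * qq ^ j / (1 - qq)"
  have x0: "0 \<le> x" unfolding x_def using qq dd_pos by auto
  have xX: "x \<le> dd / (1 - qq)" unfolding x_def using qq dd_pos
    by (intro divide_right_mono mult_left_le) (auto simp: power_le_one)
  have e1: "exp x - 1 \<le> x * exp x"
  proof -
    have "1 + (- x) \<le> exp (- x)" by (rule exp_ge_add_one_self)
    hence "(1 - x) * exp x \<le> exp (- x) * exp x" by (intro mult_right_mono) auto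
    thus ?thesis by (simp add: exp_minus field_simps)
  qed
  have "acoef \<kappa> j' - acoef \<kappa> j \<le> acoef \<kappa> j * (exp x - 1)"
    using acoef_le[OF jj] unfolding x_def by (simp add: algebra_simps)
  also have "\<dots> \<le> BB * (x * exp x)"
    using acoef_bound[of j] acoef_pos[of j] e1 x0 by (intro mult_mono) auto
  also have "\<dots> \<le> BB * (x * BB)"
    unfolding BB_def using xX x0 by (intro mult_left_mono) auto
  also have "\<dots> = CC * qq ^ j" unfolding CC_def x_def by (simp add: field_simps)
  finally have "acoef \<kappa> j' - acoef \<kappa> j \<le> CC * qq ^ j" .
  moreover have "acoef \<kappa> j \<le> acoef \<kappa> j'" by (rule acoef_mono[OF jj])
  ultimately show ?thesis by simp
qed

lemma CC_pos: "CC \<ge> 0" unfolding CC_def BB_def using dd_pos qq by auto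

lemma b_diff:
  assumes "j < k"
  shows "\<bar>acoef \<kappa> j * acoef \<kappa> (k - 1 - j) - acoef \<kappa> k * acoef \<kappa> k\<bar> \<le> BB * CC * (qq ^ j + qq ^ (k - 1 - j))"
proof -
  have "acoef \<kappa> j * acoef \<kappa> (k - 1 - j) - acoef \<kappa> k * acoef \<kappa> k
      = acoef \<kappa> j * (acoef \<kappa> (k - 1 - j) - acoef \<kappa> k) + acoef \<kappa> k * (acoef \<kappa> j - acoef \<kappa> k)"
    by (simp add: algebra_simps)
  hence "\<bar>\<dots>\<bar> \<le> acoef \<kappa> j * \<bar>acoef \<kappa> k - acoef \<kappa> (k - 1 - j)\<bar> + acoef \<kappa> k * \<bar>acoef \<kappa> k - acoef \<kappa> j\<bar>"
  proof -
    have "\<bar>acoef \<kappa> j * (acoef \<kappa> (k - 1 - j) - acoef \<kappa> k) + acoef \<kappa> k * (acoef \<kappa> j - acoef \<kappa> k)\<bar>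
        \<le> \<bar>acoef \<kappa> j * (acoef \<kappa> (k - 1 - j) - acoef \<kappa> k)\<bar> + \<bar>acoef \<kappa> k * (acoef \<kappa> j - acoef \<kappa> k)\<bar>"
      by (rule abs_triangle_ineq)
    also have "\<dots> = acoef \<kappa> j * \<bar>acoef \<kappa> k - acoef \<kappa> (k - 1 - j)\<bar> + acoef \<kappa> k * \<bar>acoef \<kappa> k - acoef \<kappa> j\<bar>"
      using acoef_pos[of j] acoef_pos[of k] by (simp add: abs_mult abs_minus_commute)
    finally show ?thesis using \<open>acoef \<kappa> j * acoef \<kappa> (k - 1 - j) - acoef \<kappa> k * acoef \<kappa> k = _\<close> by simp
  qed
  also have "\<dots> \<le> BB * (CC * qq ^ (k - 1 - j)) + BB * (CC * qq ^ j)"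
    using assms acoef_pos[of j] acoef_pos[of k] acoef_bound[of j] acoef_bound[of k]
    by (intro add_mono mult_mono acoef_diff) auto
  finally show ?thesis by (simp add: algebra_simps)
qed

end



lemma sin_sum_cos:
  fixes x :: real and k :: nat
  shows "sin x * (\<Sum>j<k. cos ((2 * real j - real k + 1) * x)) = sin (real k * x)"
proof -
  define s where "s j = sin ((2 * real j - real k) * x)" for j :: nat
  have "2 * (sin x * cos ((2 * real j - real k + 1) * x)) = s (Suc j) - s j" for j
  proof -
    have a: "(2 * real (Suc j) - real k) * x = (2 * real j - real k + 1) * x + x"
      by (simp add: algebra_simps)
    have b: "(2 * real j - real k) * x = (2 * real j - real k + 1) * x - x"
      by (simp add: algebra_simps)
    show ?thesis unfolding s_def a b sin_add sin_diff by (simp add: algebra_simps)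
  qed
  hence "2 * (sin x * (\<Sum>j<k. cos ((2 * real j - real k + 1) * x))) = (\<Sum>j<k. s (Suc j) - s j)"
    by (simp add: sum_distrib_left)
  also have "\<dots> = s k - s 0" by (rule sum_lessThan_telescope)
  also have "\<dots> = 2 * sin (real k * x)" unfolding s_def by (simp add: algebra_simps)
  finally show ?thesis by simp
qed

lemma poly_geom_bounded:
  fixes \<tau> :: real and p :: nat
  assumes "0 < \<tau>" "\<tau> < 1"
  shows "\<exists>L. \<forall>k. real k ^ p * \<tau> ^ k \<le> L"
proof (cases "p = 0")
  case True
  thus ?thesis using assms by (intro exI[of _ 1]) (auto simp: power_le_one)
next
  case False
  define \<sigma> where "\<sigma> = root p \<tau>"
  have s: "0 < \<sigma>" "\<sigma> < 1" unfolding \<sigma>_def using assms False by (auto simp: real_root_lt_1_iff)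
  have sp: "\<sigma> ^ p = \<tau>" unfolding \<sigma>_def using assms False by simp
  have "(\<lambda>k. real k * \<sigma> ^ k) \<longlonglongrightarrow> 0"
    using powser_times_n_limit_0[of \<sigma>] s by simp
  hence "(\<lambda>k. (real k * \<sigma> ^ k) ^ p) \<longlonglongrightarrow> 0 ^ p" by (intro tendsto_power)
  moreover have "(real k * \<sigma> ^ k) ^ p = real k ^ p * \<tau> ^ k" for k
    unfolding sp[symmetric] by (simp add: power_mult_distrib power_mult[symmetric] mult.commute)
  ultimately have "(\<lambda>k. real k ^ p * \<tau> ^ k) \<longlonglongrightarrow> 0" using False by (simp add: power_0_left)
  hence "Bseq (\<lambda>k. real k ^ p * \<tau> ^ k)" by (rule convergent_imp_Bseq[OF convergentI])
  then obtain L where "\<And>k. norm (real k ^ p * \<tau> ^ k) \<le> L" by (auto simp: Bseq_def)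
  thus ?thesis by (intro exI[of _ L]) (auto intro: order.trans[OF abs_ge_self])
qed

lemma expo_bound:
  fixes j k :: nat and q r \<tau> :: real
  assumes jk: "j < k" and q: "0 \<le> q" "q \<le> r" and r: "r = \<tau> ^ 2" and t: "0 \<le> \<tau>" "\<tau> \<le> 1"
  defines "e \<equiv> (if k \<le> 2 * j + 1 then 2 * j + 1 - k else k - 1 - 2 * j)"
  shows "q ^ j * r ^ e \<le> \<tau> ^ (k - 1)" "q ^ (k - 1 - j) * r ^ e \<le> \<tau> ^ (k - 1)"
proof -
  have r0: "0 \<le> r" using q by simp
  have "q ^ j * r ^ e \<le> r ^ j * r ^ e" using q r0 by (intro mult_right_mono power_mono) auto
  also have "\<dots> = \<tau> ^ (2 * (j + e))" unfolding r by (simp add: power_add power_mult[symmetric])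
  also have "\<dots> \<le> \<tau> ^ (k - 1)" using t by (intro power_decreasing) (auto simp: e_def)
  finally show "q ^ j * r ^ e \<le> \<tau> ^ (k - 1)" .
  have "q ^ (k - 1 - j) * r ^ e \<le> r ^ (k - 1 - j) * r ^ e" using q r0 by (intro mult_right_mono power_mono) auto
  also have "\<dots> = \<tau> ^ (2 * ((k - 1 - j) + e))" unfolding r by (simp add: power_add power_mult[symmetric])
  also have "\<dots> \<le> \<tau> ^ (k - 1)" using t jk by (intro power_decreasing) (auto simp: e_def)
  finally show "q ^ (k - 1 - j) * r ^ e \<le> \<tau> ^ (k - 1)" .
qed

lemma Rr_cont:
  assumes "\<kappa> > 0" "n \<ge> 1"
  shows "continuous_on UNIV (Rr \<kappa> n t)"
proof -
  have q: "0 < qpar \<kappa>" "qpar \<kappa> < 1" using qpar_bounds[OF assms(1)] by auto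
  have "continuous_on UNIV (\<lambda>\<theta>. Re (Rf \<kappa> n t (cis \<theta>)))"
    by (intro continuous_intros cont_circ[OF assms(1) Rf_hol[OF q]])
  moreover have "(\<lambda>\<theta>. Re (Rf \<kappa> n t (cis \<theta>))) = Rr \<kappa> n t"
    using Rf_cis[OF assms(2) q] by auto
  ultimately show ?thesis by metis
qed



lemma main_bound:
  fixes \<kappa> :: real and n k :: nat and t :: real
  assumes kp: "\<kappa> > 0" and n1: "n \<ge> 1" and k1: "k \<ge> 1"
    and M1: "\<forall>m::nat. \<bar>integral {0..pi} (\<lambda>\<theta>. (sin \<theta>)\<^sup>2 * Rr \<kappa> n t \<theta> * cos (m * \<theta>))\<bar> \<le> M1 * rad \<kappa> ^ m"
    and M2: "\<forall>m::nat. \<bar>integral {0..pi} (\<lambda>\<theta>. sin \<theta> * Rr \<kappa> n t \<theta> * sin (m * \<theta>))\<bar> \<le> M2 * rad \<kappa> ^ m"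
  shows "\<bar>qsol \<kappa> n k t\<bar> \<le> sqrt (gam \<kappa> n / gam \<kappa> 1) * (BB \<kappa> ^ 2 * M2 + 2 * BB \<kappa> * CC \<kappa> * M1)
            * (real k * sqrt (rad \<kappa>) ^ (k - 1))"
proof -
  define q where "q = qpar \<kappa>"
  define r where "r = rad \<kappa>"
  define \<tau> where "\<tau> = sqrt r"
  define B where "B = BB \<kappa>"
  define C where "C = CC \<kappa>"
  have q: "0 < q" "q < 1" unfolding q_def using qpar_bounds[OF kp] by auto
  have r: "q < r" "r < 1" "0 < r" unfolding q_def r_def using rad_bounds[OF kp] by auto
  have \<tau>: "0 < \<tau>" "\<tau> < 1" "r = \<tau> ^ 2" unfolding \<tau>_def using r by auto
  have qqe: "qq \<kappa> = q" by (simp add: qq_def[OF kp] q_def)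
  have Bp: "0 < B" by (simp add: B_def BB_def[OF kp])
  have Cp: "0 \<le> C" unfolding C_def using CC_pos[OF kp] .
  have M1p: "0 \<le> M1" using spec[OF M1, of 0] by simp
  have M2p: "0 \<le> M2" using spec[OF M2, of 0] by simp
  define Gs where "Gs \<theta> = (sin \<theta>)\<^sup>2 * Rr \<kappa> n t \<theta>" for \<theta>
  define Hs where "Hs \<theta> = sin \<theta> * Rr \<kappa> n t \<theta>" for \<theta>
  have Rc: "continuous_on UNIV (Rr \<kappa> n t)" by (rule Rr_cont[OF kp n1])
  have Gc: "continuous_on UNIV Gs" unfolding Gs_def by (intro continuous_intros Rc)
  have Hc: "continuous_on UNIV Hs" unfolding Hs_def by (intro continuous_intros Rc)
  define sk where "sk = sqrt (gam \<kappa> 1 / gam \<kappa> k)"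
  define b where "b j = acoef \<kappa> j * acoef \<kappa> (k - 1 - j)" for j
  define c where "c j = 2 * real j - real k + 1" for j
  define a where "a = acoef \<kappa> k"
  have Pk: "Ppoly \<kappa> k \<theta> = sk * (\<Sum>j<k. b j * cos (c j * \<theta>))" for \<theta>
  proof -
    have e: "qpoch (- qpar \<kappa>) (qpar \<kappa>) j * qpoch (- qpar \<kappa>) (qpar \<kappa>) (k - 1 - j)
              / (qpoch (qpar \<kappa>) (qpar \<kappa>) j * qpoch (qpar \<kappa>) (qpar \<kappa>) (k - 1 - j)) = b j" for j
      unfolding b_def acoef_def by simp
    show ?thesis unfolding Ppoly_def e sk_def c_def ..
  qed
  have Pc: "continuous_on UNIV (Ppoly \<kappa> k)"
    unfolding Pk[abs_def] by (intro continuous_intros)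
  define I where "I j = integral {0..pi} (\<lambda>\<theta>. Gs \<theta> * cos (c j * \<theta>))" for j
  define J where "J = integral {0..pi} (\<lambda>\<theta>. Hs \<theta> * sin (real k * \<theta>))"
  have intI: "(\<lambda>\<theta>. Gs \<theta> * cos (c j * \<theta>)) integrable_on {0..pi}" for j
    by (intro integrable_continuous_real continuous_intros continuous_on_subset[OF Gc]) auto
  have fe: "(\<lambda>\<theta>. exp (- t * (1 - cos \<theta>)) * Ppoly \<kappa> n \<theta> * Ppoly \<kappa> k \<theta> * mu_dens \<kappa> \<theta>)
          = (\<lambda>\<theta>. Gs \<theta> * Ppoly \<kappa> k \<theta>)"
  proof
    fix \<theta>
    have "exp (- t * (1 - cos \<theta>)) * Ppoly \<kappa> n \<theta> * Ppoly \<kappa> k \<theta> * mu_dens \<kappa> \<theta>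
        = (exp (- t * (1 - cos \<theta>)) * Ppoly \<kappa> n \<theta> * mu_dens \<kappa> \<theta>) * Ppoly \<kappa> k \<theta>"
      by (simp only: mult_ac)
    also have "\<dots> = Gs \<theta> * Ppoly \<kappa> k \<theta>" unfolding G_eq Gs_def ..
    finally show "exp (- t * (1 - cos \<theta>)) * Ppoly \<kappa> n \<theta> * Ppoly \<kappa> k \<theta> * mu_dens \<kappa> \<theta> = Gs \<theta> * Ppoly \<kappa> k \<theta>" .
  qed
  have LB: "(LBINT \<theta>=0..pi. exp (- t * (1 - cos \<theta>)) * Ppoly \<kappa> n \<theta> * Ppoly \<kappa> k \<theta> * mu_dens \<kappa> \<theta>)
         = integral {0..pi} (\<lambda>\<theta>. Gs \<theta> * Ppoly \<kappa> k \<theta>)"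
    unfolding fe zero_ereal_def
    by (rule interval_integral_eq_integral)
       (auto intro!: borel_integrable_atLeastAtMost' continuous_intros continuous_on_subset[OF Gc]
                     continuous_on_subset[OF Pc])
  have S1: "integral {0..pi} (\<lambda>\<theta>. Gs \<theta> * Ppoly \<kappa> k \<theta>) = sk * (\<Sum>j<k. b j * I j)"
  proof -
    have "(\<lambda>\<theta>. Gs \<theta> * Ppoly \<kappa> k \<theta>) = (\<lambda>\<theta>. sk * (\<Sum>j<k. b j * (Gs \<theta> * cos (c j * \<theta>))))"
      unfolding Pk by (simp add: sum_distrib_left mult_ac)
    hence "integral {0..pi} (\<lambda>\<theta>. Gs \<theta> * Ppoly \<kappa> k \<theta>)
        = sk * integral {0..pi} (\<lambda>\<theta>. \<Sum>j<k. b j * (Gs \<theta> * cos (c j * \<theta>)))"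
      by simp
    also have "integral {0..pi} (\<lambda>\<theta>. \<Sum>j<k. b j * (Gs \<theta> * cos (c j * \<theta>)))
             = (\<Sum>j<k. integral {0..pi} (\<lambda>\<theta>. b j * (Gs \<theta> * cos (c j * \<theta>))))"
      by (rule integral_sum) (auto intro: integrable_on_mult_right intI)
    also have "\<dots> = (\<Sum>j<k. b j * I j)" unfolding I_def by simp
    finally show ?thesis .
  qed
  have S2: "(\<Sum>j<k. I j) = J"
  proof -
    have "(\<Sum>j<k. I j) = integral {0..pi} (\<lambda>\<theta>. \<Sum>j<k. Gs \<theta> * cos (c j * \<theta>))"
      unfolding I_def by (rule integral_sum[symmetric]) (auto intro: intI)
    also have "(\<lambda>\<theta>. \<Sum>j<k. Gs \<theta> * cos (c j * \<theta>)) = (\<lambda>\<theta>. Hs \<theta> * sin (real k * \<theta>))"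
    proof
      fix \<theta>
      have "(\<Sum>j<k. Gs \<theta> * cos (c j * \<theta>)) = Hs \<theta> * (sin \<theta> * (\<Sum>j<k. cos ((2 * real j - real k + 1) * \<theta>)))"
        unfolding Gs_def Hs_def c_def by (simp add: sum_distrib_left power2_eq_square mult_ac)
      also have "\<dots> = Hs \<theta> * sin (real k * \<theta>)" unfolding sin_sum_cos ..
      finally show "(\<Sum>j<k. Gs \<theta> * cos (c j * \<theta>)) = Hs \<theta> * sin (real k * \<theta>)" .
    qed
    finally show ?thesis unfolding J_def .
  qed
  have S3: "(\<Sum>j<k. b j * I j) = a\<^sup>2 * J + (\<Sum>j<k. (b j - a\<^sup>2) * I j)"
    unfolding S2[symmetric] by (simp add: sum_distrib_left sum_distrib_right algebra_simps sum.distrib sum_subtractf)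
  define e where "e j = (if k \<le> 2 * j + 1 then 2 * j + 1 - k else k - 1 - 2 * j)" for j
  have bI: "\<bar>I j\<bar> \<le> M1 * r ^ e j" for j
  proof -
    have "cos (c j * \<theta>) = cos (real (e j) * \<theta>)" for \<theta>
    proof (cases "k \<le> 2 * j + 1")
      case True
      hence "c j = real (e j)" unfolding c_def e_def by (simp add: of_nat_diff)
      thus ?thesis by simp
    next
      case False
      hence "c j = - real (e j)" unfolding c_def e_def by (simp add: of_nat_diff)
      thus ?thesis by simp
    qed
    hence "I j = integral {0..pi} (\<lambda>\<theta>. (sin \<theta>)\<^sup>2 * Rr \<kappa> n t \<theta> * cos (real (e j) * \<theta>))"
      unfolding I_def Gs_def by simp
    thus ?thesis using M1 unfolding r_def by simp
  qed
  have bJ: "\<bar>J\<bar> \<le> M2 * r ^ k"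
    using M2 unfolding J_def Hs_def r_def by simp
  have bb: "\<bar>b j - a\<^sup>2\<bar> \<le> B * C * (q ^ j + q ^ (k - 1 - j))" if "j < k" for j
    using b_diff[OF kp that] unfolding b_def a_def B_def C_def qqe by (simp add: power2_eq_square)
  have tmb: "\<bar>(b j - a\<^sup>2) * I j\<bar> \<le> 2 * B * C * M1 * \<tau> ^ (k - 1)" if "j < k" for j
  proof -
    have eb: "q ^ j * r ^ e j \<le> \<tau> ^ (k - 1)" "q ^ (k - 1 - j) * r ^ e j \<le> \<tau> ^ (k - 1)"
      using expo_bound[OF that _ _ \<tau>(3), of q] q r \<tau> unfolding e_def by auto
    have "\<bar>(b j - a\<^sup>2) * I j\<bar> = \<bar>b j - a\<^sup>2\<bar> * \<bar>I j\<bar>" by (simp add: abs_mult)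
    also have "\<dots> \<le> (B * C * (q ^ j + q ^ (k - 1 - j))) * (M1 * r ^ e j)"
      using bb[OF that] bI[of j] by (intro mult_mono) auto
    also have "\<dots> = B * C * M1 * (q ^ j * r ^ e j + q ^ (k - 1 - j) * r ^ e j)"
      by (simp add: algebra_simps)
    also have "\<dots> \<le> B * C * M1 * (\<tau> ^ (k - 1) + \<tau> ^ (k - 1))"
      using eb Bp Cp M1p by (intro mult_left_mono add_mono) auto
    finally show ?thesis by simp
  qed
  have sumb: "\<bar>\<Sum>j<k. (b j - a\<^sup>2) * I j\<bar> \<le> real k * (2 * B * C * M1 * \<tau> ^ (k - 1))"
  proof -
    have "\<bar>\<Sum>j<k. (b j - a\<^sup>2) * I j\<bar> \<le> (\<Sum>j<k. \<bar>(b j - a\<^sup>2) * I j\<bar>)" by (rule sum_abs)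
    also have "\<dots> \<le> (\<Sum>j<k. 2 * B * C * M1 * \<tau> ^ (k - 1))" by (intro sum_mono tmb) auto
    finally show ?thesis by simp
  qed
  have a0: "0 < a" "a \<le> B" unfolding a_def B_def using acoef_pos[OF kp] acoef_bound[OF kp] by auto
  have aJ: "\<bar>a\<^sup>2 * J\<bar> \<le> B\<^sup>2 * M2 * \<tau> ^ (k - 1)"
  proof -
    have "\<bar>a\<^sup>2 * J\<bar> = a\<^sup>2 * \<bar>J\<bar>" by (simp add: abs_mult)
    also have "\<dots> \<le> B\<^sup>2 * (M2 * r ^ k)" using a0 bJ by (intro mult_mono power_mono) auto
    also have "r ^ k = \<tau> ^ (2 * k)" unfolding \<tau>(3) by (simp add: power_mult)
    also have "\<tau> ^ (2 * k) \<le> \<tau> ^ (k - 1)" using \<tau> by (intro power_decreasing) auto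
    hence "B\<^sup>2 * (M2 * \<tau> ^ (2 * k)) \<le> B\<^sup>2 * (M2 * \<tau> ^ (k - 1))"
      using M2p by (intro mult_left_mono) auto
    finally show ?thesis by simp
  qed
  have tot: "\<bar>\<Sum>j<k. b j * I j\<bar> \<le> (B\<^sup>2 * M2 + 2 * B * C * M1) * (real k * \<tau> ^ (k - 1))"
  proof -
    have "\<bar>\<Sum>j<k. b j * I j\<bar> \<le> \<bar>a\<^sup>2 * J\<bar> + \<bar>\<Sum>j<k. (b j - a\<^sup>2) * I j\<bar>"
      unfolding S3 by (rule abs_triangle_ineq)
    also have "\<dots> \<le> B\<^sup>2 * M2 * \<tau> ^ (k - 1) + real k * (2 * B * C * M1 * \<tau> ^ (k - 1))"
      using aJ sumb by (rule add_mono)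
    also have "B\<^sup>2 * M2 * \<tau> ^ (k - 1) \<le> real k * (B\<^sup>2 * M2 * \<tau> ^ (k - 1))"
    proof -
      have "0 \<le> B\<^sup>2 * M2 * \<tau> ^ (k - 1)" using M2p \<tau> by (intro mult_nonneg_nonneg) auto
      moreover have "1 \<le> real k" using k1 by simp
      ultimately show ?thesis using mult_right_mono[of 1 "real k" "B\<^sup>2 * M2 * \<tau> ^ (k - 1)"] by simp
    qed
    hence "B\<^sup>2 * M2 * \<tau> ^ (k - 1) + real k * (2 * B * C * M1 * \<tau> ^ (k - 1))
         \<le> real k * (B\<^sup>2 * M2 * \<tau> ^ (k - 1)) + real k * (2 * B * C * M1 * \<tau> ^ (k - 1))" by simp
    also have "\<dots> = (B\<^sup>2 * M2 + 2 * B * C * M1) * (real k * \<tau> ^ (k - 1))" by (simp add: algebra_simps)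
    finally show ?thesis .
  qed
  have g1: "0 < gam \<kappa> 1" "gam \<kappa> 1 \<le> gam \<kappa> k" "0 < gam \<kappa> n"
    unfolding gam_def using kp k1 n1 by auto
  have sk: "0 \<le> sk" "sk \<le> 1" unfolding sk_def using g1 by auto
  have gn: "sqrt (gam \<kappa> n / gam \<kappa> k) \<le> sqrt (gam \<kappa> n / gam \<kappa> 1)"
    using g1 by (auto intro!: divide_left_mono mult_pos_pos)
  have "\<bar>qsol \<kappa> n k t\<bar> = sqrt (gam \<kappa> n / gam \<kappa> k) * (sk * \<bar>\<Sum>j<k. b j * I j\<bar>)"
  proof -
    have "0 \<le> gam \<kappa> n / gam \<kappa> k" using g1 by (auto intro: divide_nonneg_pos order.trans[OF _ g1(2)] less_imp_le)
    thus ?thesis unfolding qsol_def LB S1 using sk by (simp add: abs_mult)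
  qed
  also have "\<dots> \<le> sqrt (gam \<kappa> n / gam \<kappa> 1) * (1 * ((B\<^sup>2 * M2 + 2 * B * C * M1) * (real k * \<tau> ^ (k - 1))))"
  proof -
    have "0 \<le> gam \<kappa> n / gam \<kappa> 1" using g1 by simp
    thus ?thesis using gn sk tot by (intro mult_mono) (auto intro!: mult_nonneg_nonneg)
  qed
  finally show ?thesis unfolding B_def C_def \<tau>_def r_def by simp
qed



theorem lemma3p3:
  fixes \<kappa> :: real and l n :: nat and t :: real
  assumes "\<kappa> > 0" and "l \<ge> 1" and "n \<ge> 1" and "t \<ge> 0"
  shows "\<exists>C. \<forall>k::nat. k \<ge> 1 \<longrightarrow> \<bar>qsol \<kappa> n k t\<bar> \<le> C / real k ^ l"
proof -
  note kp = assms(1)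
  obtain M1 where M1: "\<forall>m::nat. \<bar>integral {0..pi} (\<lambda>\<theta>. (sin \<theta>)\<^sup>2 * Rr \<kappa> n t \<theta> * cos (m * \<theta>))\<bar> \<le> M1 * rad \<kappa> ^ m"
    using B1[OF kp assms(3), of t] by blast
  obtain M2 where M2: "\<forall>m::nat. \<bar>integral {0..pi} (\<lambda>\<theta>. sin \<theta> * Rr \<kappa> n t \<theta> * sin (m * \<theta>))\<bar> \<le> M2 * rad \<kappa> ^ m"
    using B2[OF kp assms(3), of t] by blast
  have M1p: "0 \<le> M1" using spec[OF M1, of 0] by simp
  have M2p: "0 \<le> M2" using spec[OF M2, of 0] by simp
  define \<tau> where "\<tau> = sqrt (rad \<kappa>)"
  have \<tau>: "0 < \<tau>" "\<tau> < 1" unfolding \<tau>_def using rad_bounds[OF kp] by auto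
  obtain L where L: "\<And>k. real k ^ (l + 1) * \<tau> ^ k \<le> L" using poly_geom_bounded[OF \<tau>] by blast
  define K where "K = sqrt (gam \<kappa> n / gam \<kappa> 1) * (BB \<kappa> ^ 2 * M2 + 2 * BB \<kappa> * CC \<kappa> * M1)"
  have K0: "0 \<le> K"
  proof -
    have "0 \<le> gam \<kappa> n / gam \<kappa> 1" using kp assms(3) by (simp add: gam_def)
    moreover have "0 \<le> BB \<kappa>" by (simp add: BB_def[OF kp])
    ultimately show ?thesis unfolding K_def using M1p M2p CC_pos[OF kp] by (auto intro!: mult_nonneg_nonneg add_nonneg_nonneg)
  qed
  show ?thesis
  proof (intro exI allI impI)
    fix k :: nat assume k1: "k \<ge> 1"
    have mb: "\<bar>qsol \<kappa> n k t\<bar> \<le> K * (real k * \<tau> ^ (k - 1))"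
      using main_bound[OF kp assms(3) k1 M1 M2] unfolding K_def \<tau>_def by simp
    have kpos: "0 < real k ^ l" using k1 by simp
    have "(real k * \<tau> ^ (k - 1)) * (\<tau> * real k ^ l) = real k ^ (l + 1) * \<tau> ^ k"
    proof -
      have "\<tau> ^ (k - 1) * \<tau> = \<tau> ^ k" using k1 by (metis Suc_diff_1 le_less_trans less_numeral_extra(1) power_Suc2 zero_less_iff_neq_zero less_le_trans zero_less_one)
      thus ?thesis by (simp add: algebra_simps)
    qed
    also have "\<dots> \<le> L" by (rule L)
    finally have "real k * \<tau> ^ (k - 1) \<le> L / (\<tau> * real k ^ l)"
      using \<tau> kpos by (simp add: pos_le_divide_eq)
    hence "K * (real k * \<tau> ^ (k - 1)) \<le> K * (L / (\<tau> * real k ^ l))"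
      using K0 by (intro mult_left_mono)
    also have "\<dots> = (K * L / \<tau>) / real k ^ l" by (simp add: field_simps)
    finally show "\<bar>qsol \<kappa> n k t\<bar> \<le> (K * L / \<tau>) / real k ^ l" using mb by linarith
  qed
qed


end
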